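(* Let $K\ge2$, $P>0$ and $H_1\ge H_2\ge\cdots\ge H_K>0$. For $\boldsymbol\alpha=(\alpha_1,\dots,\alpha_K)$ with $0\le\alpha_k\le1$ and $\sum_{k=1}^K\alpha_k=1$ let $$r_k(\boldsymbol\alpha)=\log_2\Big(1+\frac{\alpha_k}{\sum_{i=1}^{k-1}\alpha_i+\frac{1}{PH_k}}\Big).$$ Then there exists a maximizer $\boldsymbol\alpha^\star$ of $\min_{k}r_k(\boldsymbol\alpha)$ over this set such that $r_1(\boldsymbol\alpha^\star)=r_2(\boldsymbol\alpha^\star)=\cdots=r_K(\boldsymbol\alpha^\star)=r_{\max}$, where $r_{\max}$ is the maximum value.
   Context: $K$-user downlink NOMA with superposition coding and successive interference cancellation: $\alpha_k$ is the fraction of total power $P$ given to Receiver $k$'s message, $H_k$ is its channel gain, and $r_k(\boldsymbol\alpha)$ is its achieved rate. *)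

theory Defs
  imports Complex_Main
begin

definition feasible :: "nat \<Rightarrow> (nat \<Rightarrow> real) \<Rightarrow> bool" where
  "feasible K \<alpha> \<longleftrightarrow> (\<forall>k\<in>{1..K}. 0 \<le> \<alpha> k \<and> \<alpha> k \<le> 1) \<and> (\<Sum>k=1..K. \<alpha> k) = 1"

definition rate :: "real \<Rightarrow> (nat \<Rightarrow> real) \<Rightarrow> (nat \<Rightarrow> real) \<Rightarrow> nat \<Rightarrow> real" where
  "rate P H \<alpha> k = log 2 (1 + \<alpha> k / ((\<Sum>i=1..<k. \<alpha> i) + 1 / (P * H k)))"

definition min_rate :: "nat \<Rightarrow> real \<Rightarrow> (nat \<Rightarrow> real) \<Rightarrow> (nat \<Rightarrow> real) \<Rightarrow> real" where
  "min_rate K P H \<alpha> = Min ((\<lambda>k. rate P H \<alpha> k) ` {1..K})"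

end

theory Submission
  imports Defs
begin

primrec gg :: "(nat \<Rightarrow> real) \<Rightarrow> real \<Rightarrow> nat \<Rightarrow> real" where
  "gg n t 0 = 0"
| "gg n t (Suc k) = t * gg n t k + (t - 1) * n (Suc k)"

lemma gg_one: "gg n 1 k = 0"
  by (induction k) auto

lemma gg_cont: "isCont (\<lambda>t. gg n t k) x"
  by (induction k) (auto intro!: continuous_intros)

lemma gg_nonneg: "t \<ge> 1 \<Longrightarrow> (\<And>k. n k \<ge> 0) \<Longrightarrow> gg n t k \<ge> 0"
  by (induction k) auto

lemma sumB: "(\<Sum>i=1..<Suc m. f i) = (\<Sum>i=1..<m. f i) + f m" if "m \<ge> 1" for f :: "nat \<Rightarrow> real"
  using that by (simp add: sum.atLeastLessThan_Suc)

lemma sum_tele: "(\<Sum>i=1..<Suc m. (\<lambda>k. gg n t k - gg n t (k - 1)) i) = gg n t m"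
  by (induction m) (auto simp: sum.atLeastLessThan_Suc)

theorem lemma5:
  fixes K :: nat and P :: real and H :: "nat \<Rightarrow> real"
  assumes "K \<ge> 2" and "P > 0"
    and "\<And>i j. 1 \<le> i \<Longrightarrow> i \<le> j \<Longrightarrow> j \<le> K \<Longrightarrow> H i \<ge> H j"
    and "\<And>k. 1 \<le> k \<Longrightarrow> k \<le> K \<Longrightarrow> H k > 0"
  shows "\<exists>\<alpha>s rmax. feasible K \<alpha>s
           \<and> min_rate K P H \<alpha>s = rmax
           \<and> (\<forall>\<alpha>. feasible K \<alpha> \<longrightarrow> min_rate K P H \<alpha> \<le> rmax)
           \<and> (\<forall>k\<in>{1..K}. rate P H \<alpha>s k = rmax)"
proof -
  define n where "n k = (if 1 \<le> k \<and> k \<le> K then 1 / (P * H k) else 0)" for k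
  have npos: "n k > 0" if "1 \<le> k" "k \<le> K" for k
    using that assms(2) assms(4)[OF that] by (simp add: n_def)
  have nnn: "n k \<ge> 0" for k
    using npos[of k] by (cases "1 \<le> k \<and> k \<le> K") (auto simp: n_def)
  obtain K' where K': "K = Suc K'" using assms(1) by (cases K) auto
  define tb where "tb = 1 + P * H K"
  have HK: "H K > 0" using assms(1,4) by auto
  have tb1: "1 \<le> tb" using HK assms(2) by (simp add: tb_def)
  have "gg n tb K \<ge> 1"
  proof -
    have "gg n tb K = tb * gg n tb K' + (tb - 1) * n K" by (simp add: K')
    moreover have "tb * gg n tb K' \<ge> 0" using gg_nonneg[OF tb1 nnn] tb1 by simp
    moreover have "(tb - 1) * n K = 1" using HK assms(1,2) by (simp add: tb_def n_def)
    ultimately show ?thesis by linarith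
  qed
  then obtain t where t1: "1 \<le> t" and tt: "t \<le> tb" and gK: "gg n t K = 1"
    using IVT[of "\<lambda>t. gg n t K" 1 1 tb] gg_one tb1 gg_cont by auto
  have g0: "gg n t k \<ge> 0" for k using gg_nonneg[OF t1 nnn] .
  define \<alpha> where "\<alpha> k = gg n t k - gg n t (k - 1)" for k
  have inc: "\<alpha> (Suc m) = (t - 1) * (gg n t m + n (Suc m))" for m
    by (simp add: \<alpha>_def algebra_simps)
  have anon: "\<alpha> k \<ge> 0" if "k \<ge> 1" for k
    using that inc[of "k - 1"] t1 g0[of "k-1"] nnn[of k] by simp
  have mono: "gg n t m \<le> gg n t (m + d)" for m d
  proof (induction d)
    case (Suc d)
    have "\<alpha> (Suc (m + d)) \<ge> 0" using anon by simp
    then show ?case using Suc by (simp add: \<alpha>_def)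
  qed simp
  have psum: "(\<Sum>i=1..<Suc m. \<alpha> i) = gg n t m" for m
    using sum_tele[of n t m] by (simp add: \<alpha>_def)
  have psum': "(\<Sum>i=1..<k. \<alpha> i) = gg n t (k - 1)" if "k \<ge> 1" for k
    using psum[of "k - 1"] that by simp
  have feas: "feasible K \<alpha>"
    unfolding feasible_def
  proof (intro conjI ballI)
    fix k assume k: "k \<in> {1..K}"
    show "0 \<le> \<alpha> k" using anon k by auto
    have "gg n t k \<le> gg n t K" using mono[of k "K - k"] k by auto
    then show "\<alpha> k \<le> 1" using gK g0[of "k - 1"] by (simp add: \<alpha>_def)
  next
    have "{1..K} = {1..<Suc K}" by auto
    then show "(\<Sum>k = 1..K. \<alpha> k) = 1" using psum[of K] gK by simp
  qed
  have rate_eq: "rate P H \<alpha> k = log 2 t" if k: "k \<in> {1..K}" for k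
  proof -
    obtain m where m: "k = Suc m" using k by (cases k) auto
    have pos: "gg n t m + n k > 0" using g0[of m] npos[of k] k by auto
    have nk: "n k = 1 / (P * H k)" using k by (simp add: n_def)
    have "1 + \<alpha> k / ((\<Sum>i=1..<k. \<alpha> i) + 1 / (P * H k)) = t"
      using psum'[of k] inc[of m] pos m nk by simp
    then show ?thesis by (simp add: rate_def)
  qed
  have mr: "min_rate K P H \<alpha> = log 2 t"
  proof -
    have "(\<lambda>k. rate P H \<alpha> k) ` {1..K} = {log 2 t}"
      using rate_eq assms(1) by force
    then show ?thesis by (simp add: min_rate_def)
  qed
  have opt: "min_rate K P H \<beta> \<le> log 2 t" if fb: "feasible K \<beta>" for \<beta>
  proof (rule ccontr)
    assume "\<not> ?thesis"
    then have gt: "min_rate K P H \<beta> > log 2 t" by simp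
    have bnn: "\<beta> k \<ge> 0" if "k \<in> {1..K}" for k using fb that by (simp add: feasible_def)
    define B where "B k = (\<Sum>i=1..<k. \<beta> i)" for k
    have Bnn: "B k \<ge> 0" if "k \<le> Suc K" for k
      unfolding B_def using that bnn by (intro sum_nonneg) auto
    have key: "\<beta> k > (t - 1) * (B k + n k)" if k: "k \<in> {1..K}" for k
    proof -
      have "rate P H \<beta> k \<ge> min_rate K P H \<beta>"
        unfolding min_rate_def using k by (intro Min_le) auto
      with gt have r: "log 2 (1 + \<beta> k / (B k + n k)) > log 2 t"
        using k by (simp add: rate_def B_def n_def)
      have pos: "B k + n k > 0" using Bnn[of k] npos[of k] k by auto
      have "1 + \<beta> k / (B k + n k) > 0" using pos bnn[OF k] by (simp add: add_pos_nonneg)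
      then have "1 + \<beta> k / (B k + n k) > t" using r t1 by simp
      then have "\<beta> k / (B k + n k) > t - 1" by simp
      then show ?thesis using pos by (simp add: pos_less_divide_eq mult.commute)
    qed
    have BS: "B (Suc k) = B k + \<beta> k" if "k \<ge> 1" for k
      unfolding B_def using sumB[OF that] by simp
    have ind: "m \<le> K \<Longrightarrow> B (Suc m) \<ge> gg n t m" for m
    proof (induction m)
      case 0 then show ?case by (simp add: B_def)
    next
      case (Suc m)
      have "\<beta> (Suc m) > (t - 1) * (B (Suc m) + n (Suc m))" using key Suc.prems by auto
      moreover have "B (Suc m) \<ge> gg n t m" using Suc by simp
      moreover have "B (Suc (Suc m)) = B (Suc m) + \<beta> (Suc m)" using BS by simp
      moreover have "(t - 1) * gg n t m \<le> (t - 1) * B (Suc m)"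
        using t1 \<open>B (Suc m) \<ge> gg n t m\<close> by (intro mult_left_mono) auto
      ultimately have "B (Suc (Suc m)) \<ge> t * gg n t m + (t - 1) * n (Suc m)"
        by (simp add: algebra_simps)
      then show ?case by simp
    qed
    have "B (Suc K) > gg n t K"
    proof -
      have "\<beta> K > (t - 1) * (B K + n K)" using key assms(1) by auto
      moreover have "B K \<ge> gg n t K'" using ind[of K'] K' by simp
      moreover have "B (Suc K) = B K + \<beta> K" using BS assms(1) by simp
      moreover have "(t - 1) * gg n t K' \<le> (t - 1) * B K"
        using t1 \<open>B K \<ge> gg n t K'\<close> by (intro mult_left_mono) auto
      ultimately have "B (Suc K) > t * gg n t K' + (t - 1) * n K"
        by (simp add: algebra_simps)
      then show ?thesis by (simp add: K')
    qed
    moreover have "B (Suc K) = 1"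
    proof -
      have "{1..<Suc K} = {1..K}" by auto
      then show ?thesis using fb by (simp add: B_def feasible_def)
    qed
    ultimately show False using gK by simp
  qed
  show ?thesis
    using feas mr opt rate_eq by blast
qed

end
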